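(* Let $r\ge3$ be an integer and let $G$ be an $(r+1)$-path degenerate graph with maximum degree $\Delta\ge3$. If $G$ is a forest, then $a'_r(G)=\Delta$; otherwise $a'_r(G)=\max\{\Delta,r\}$.
   Context: Graphs are finite and simple. For an integer $r\ge3$, the generalized $r$-acyclic chromatic index $a'_r(G)$ is the minimum number of colors in a proper edge coloring of $G$ (adjacent edges get distinct colors) such that every cycle $C$ of $G$ receives at least $\min\{|C|,r\}$ distinct colors. A strict ear of a graph $G$ is a path of $G$ whose internal vertices all have degree $2$ in $G$ and whose two endpoints are distinct. For an integer $p\ge1$, a $p$-reduction of $G$ is the deletion of either an isolated vertex, or a vertex of degree $1$, or the internal vertices of a strict ear of $G$ of length at least $p$. A graph is $p$-path degenerate if it can be reduced to the empty graph by a sequence of $p$-reductions. *)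

theory Defs
  imports Main
begin

definition simple_graph :: "'a set \<Rightarrow> 'a set set \<Rightarrow> bool" where
  "simple_graph V E \<longleftrightarrow> finite V \<and>
     (\<forall>e\<in>E. \<exists>u v. e = {u, v} \<and> u \<noteq> v \<and> u \<in> V \<and> v \<in> V)"

definition degree :: "'a set set \<Rightarrow> 'a \<Rightarrow> nat" where
  "degree E v = card {e \<in> E. v \<in> e}"

definition max_degree :: "'a set \<Rightarrow> 'a set set \<Rightarrow> nat" where
  "max_degree V E = Max (insert 0 (degree E ` V))"

text \<open>A cycle given by its cyclic sequence of distinct vertices (length = number of vertices = number of edges).\<close>
definition is_cycle :: "'a set set \<Rightarrow> 'a list \<Rightarrow> bool" where
  "is_cycle E vs \<longleftrightarrow> length vs \<ge> 3 \<and> distinct vs \<and>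
     (\<forall>i < length vs. {vs ! i, vs ! ((i + 1) mod length vs)} \<in> E)"

definition cycle_edges :: "'a list \<Rightarrow> 'a set set" where
  "cycle_edges vs = {{vs ! i, vs ! ((i + 1) mod length vs)} | i. i < length vs}"

definition forest :: "'a set \<Rightarrow> 'a set set \<Rightarrow> bool" where
  "forest V E \<longleftrightarrow> \<not> (\<exists>vs. is_cycle E vs)"

definition proper_edge_coloring :: "'a set set \<Rightarrow> ('a set \<Rightarrow> nat) \<Rightarrow> bool" where
  "proper_edge_coloring E c \<longleftrightarrow>
     (\<forall>e\<in>E. \<forall>f\<in>E. e \<noteq> f \<and> e \<inter> f \<noteq> {} \<longrightarrow> c e \<noteq> c f)"

definition r_acyclic_edge_coloring :: "nat \<Rightarrow> 'a set set \<Rightarrow> nat \<Rightarrow> ('a set \<Rightarrow> nat) \<Rightarrow> bool" where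
  "r_acyclic_edge_coloring r E k c \<longleftrightarrow>
     c ` E \<subseteq> {0..<k} \<and> proper_edge_coloring E c \<and>
     (\<forall>vs. is_cycle E vs \<longrightarrow> card (c ` cycle_edges vs) \<ge> min (length vs) r)"

definition gen_acyclic_chromatic_index :: "nat \<Rightarrow> 'a set \<Rightarrow> 'a set set \<Rightarrow> nat" where
  "gen_acyclic_chromatic_index r V E = (LEAST k. \<exists>c. r_acyclic_edge_coloring r E k c)"

definition strict_ear :: "'a set set \<Rightarrow> 'a list \<Rightarrow> bool" where
  "strict_ear E xs \<longleftrightarrow> length xs \<ge> 2 \<and> distinct xs \<and>
     (\<forall>i. Suc i < length xs \<longrightarrow> {xs ! i, xs ! Suc i} \<in> E) \<and>
     (\<forall>i. 0 < i \<and> Suc i < length xs \<longrightarrow> degree E (xs ! i) = 2)"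

definition ear_interior :: "'a list \<Rightarrow> 'a set" where
  "ear_interior xs = set (butlast (tl xs))"

definition delete_vertices :: "'a set \<Rightarrow> 'a set \<Rightarrow> 'a set set \<Rightarrow> 'a set \<times> 'a set set" where
  "delete_vertices S V E = (V - S, {e \<in> E. e \<inter> S = {}})"

inductive p_reduction :: "nat \<Rightarrow> 'a set \<Rightarrow> 'a set set \<Rightarrow> 'a set \<Rightarrow> 'a set set \<Rightarrow> bool"
  for p :: nat where
  isolated: "v \<in> V \<Longrightarrow> degree E v = 0 \<Longrightarrow> (V', E') = delete_vertices {v} V E
     \<Longrightarrow> p_reduction p V E V' E'"
| leaf: "v \<in> V \<Longrightarrow> degree E v = 1 \<Longrightarrow> (V', E') = delete_vertices {v} V E
     \<Longrightarrow> p_reduction p V E V' E'"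
| ear: "strict_ear E xs \<Longrightarrow> set xs \<subseteq> V \<Longrightarrow> length xs - 1 \<ge> p
     \<Longrightarrow> (V', E') = delete_vertices (ear_interior xs) V E
     \<Longrightarrow> p_reduction p V E V' E'"

inductive path_degenerate :: "nat \<Rightarrow> 'a set \<Rightarrow> 'a set set \<Rightarrow> bool" for p :: nat where
  empty: "path_degenerate p {} {}"
| step: "p_reduction p V E V' E' \<Longrightarrow> path_degenerate p V' E' \<Longrightarrow> path_degenerate p V E"

end

theory Submission
  imports Defs
begin


lemma sg_edge: "simple_graph V E \<Longrightarrow> e \<in> E \<Longrightarrow> \<exists>u v. e = {u, v} \<and> u \<noteq> v \<and> u \<in> V \<and> v \<in> V"
  unfolding simple_graph_def by blast

lemma sg_edge_sub: "simple_graph V E \<Longrightarrow> e \<in> E \<Longrightarrow> e \<subseteq> V"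
  using sg_edge by fastforce

lemma sg_finite_E: "simple_graph V E \<Longrightarrow> finite E"
proof -
  assume a: "simple_graph V E"
  hence "E \<subseteq> Pow V" using sg_edge_sub by blast
  moreover have "finite V" using a unfolding simple_graph_def by blast
  ultimately show ?thesis by (meson finite_Pow_iff finite_subset)
qed

lemma sg_delete: "simple_graph V E \<Longrightarrow> simple_graph (V - S) {e\<in>E. e \<inter> S = {}}"
proof -
  assume a: "simple_graph V E"
  show ?thesis unfolding simple_graph_def
  proof (intro conjI ballI)
    show "finite (V - S)" using a unfolding simple_graph_def by simp
    fix e assume "e \<in> {e\<in>E. e \<inter> S = {}}"
    then obtain u v where "e = {u, v}" "u \<noteq> v" "u \<in> V" "v \<in> V" "e \<inter> S = {}" using sg_edge[OF a] by blast
    thus "\<exists>u v. e = {u, v} \<and> u \<noteq> v \<and> u \<in> V - S \<and> v \<in> V - S" by blast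
  qed
qed

lemma degree_mono: "finite E \<Longrightarrow> E' \<subseteq> E \<Longrightarrow> degree E' v \<le> degree E v"
  unfolding degree_def by (rule card_mono) auto

lemma cycle_edges_alt: "cycle_edges vs = (\<lambda>i. {vs ! i, vs ! ((i + 1) mod length vs)}) ` {..<length vs}"
  unfolding cycle_edges_def by auto

lemma finite_cycle_edges: "finite (cycle_edges vs)"
  unfolding cycle_edges_alt by simp

lemma cycle_edges_sub: "is_cycle E vs \<Longrightarrow> cycle_edges vs \<subseteq> E"
  unfolding is_cycle_def cycle_edges_def by auto

lemma cycle_edges_verts: "e \<in> cycle_edges vs \<Longrightarrow> e \<subseteq> set vs"
proof -
  assume "e \<in> cycle_edges vs"
  then obtain i where i: "i < length vs" "e = {vs ! i, vs ! ((i + 1) mod length vs)}"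
    unfolding cycle_edges_def by blast
  hence "0 < length vs" by linarith
  hence "(i + 1) mod length vs < length vs" by (rule mod_less_divisor)
  thus ?thesis using i nth_mem by auto
qed

lemma cycle_avoid:
  assumes "is_cycle E vs" "set vs \<inter> S = {}"
  shows "is_cycle {e\<in>E. e \<inter> S = {}} vs"
proof -
  have "\<forall>i < length vs. {vs ! i, vs ! ((i + 1) mod length vs)} \<inter> S = {}"
  proof (intro allI impI)
    fix i assume "i < length vs"
    hence "{vs ! i, vs ! ((i + 1) mod length vs)} \<in> cycle_edges vs" unfolding cycle_edges_def by blast
    thus "{vs ! i, vs ! ((i + 1) mod length vs)} \<inter> S = {}" using cycle_edges_verts assms(2) by blast
  qed
  thus ?thesis using assms(1) unfolding is_cycle_def by auto
qed

lemma cycle_two_edges: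
  assumes "is_cycle E vs" "w \<in> set vs"
  shows "\<exists>a b. a \<noteq> b \<and> {w,a} \<in> cycle_edges vs \<and> {w,b} \<in> cycle_edges vs \<and> w \<noteq> a \<and> w \<noteq> b"
proof -
  let ?n = "length vs"
  have n3: "?n \<ge> 3" and d: "distinct vs" using assms(1) unfolding is_cycle_def by auto
  obtain j where j: "j < ?n" "vs ! j = w" using assms(2) by (metis in_set_conv_nth)
  define ai where "ai = (if j = ?n - 1 then 0 else j + 1)"
  define bi where "bi = (if j = 0 then ?n - 1 else j - 1)"
  have ai: "ai < ?n" "ai = (j + 1) mod ?n"
  proof -
    show "ai < ?n" using j n3 unfolding ai_def by auto
    show "ai = (j + 1) mod ?n"
    proof (cases "j = ?n - 1")
      case True
      hence "j + 1 = ?n" using n3 by simp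
      thus ?thesis unfolding ai_def using True by simp
    next
      case False
      hence "j + 1 < ?n" using j by simp
      thus ?thesis unfolding ai_def using False by simp
    qed
  qed
  have bi: "bi < ?n" "(bi + 1) mod ?n = j"
  proof -
    show "bi < ?n" using j n3 unfolding bi_def by auto
    show "(bi + 1) mod ?n = j"
    proof (cases "j = 0")
      case True
      hence "bi + 1 = ?n" unfolding bi_def using n3 by simp
      thus ?thesis using True by simp
    next
      case False
      hence "bi + 1 = j" unfolding bi_def by simp
      thus ?thesis using j by simp
    qed
  qed
  have neq: "ai \<noteq> bi" "j \<noteq> ai" "j \<noteq> bi" using j n3 unfolding ai_def bi_def by auto
  have e1: "{w, vs ! ai} \<in> cycle_edges vs" unfolding cycle_edges_def using j ai by auto
  have e2: "{vs ! bi, w} \<in> cycle_edges vs" unfolding cycle_edges_def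
  proof (intro CollectI exI conjI)
    show "{vs ! bi, w} = {vs ! bi, vs ! ((bi + 1) mod ?n)}" using j bi by simp
  qed (rule bi(1))
  have "vs ! ai \<noteq> vs ! bi" "w \<noteq> vs ! ai" "w \<noteq> vs ! bi"
    using neq d ai bi j by (auto simp: nth_eq_iff_index_eq)
  moreover have "{w, vs ! bi} \<in> cycle_edges vs" using e2 by (simp add: insert_commute)
  ultimately show ?thesis using e1 by blast
qed

lemma cycle_degree:
  assumes "finite E" "is_cycle E vs" "w \<in> set vs"
  shows "degree E w \<ge> 2"
proof -
  obtain a b where ab: "a \<noteq> b" "{w,a} \<in> cycle_edges vs" "{w,b} \<in> cycle_edges vs"
    using cycle_two_edges[OF assms(2,3)] by blast
  have "{{w,a},{w,b}} \<subseteq> {e\<in>E. w \<in> e}" using ab cycle_edges_sub[OF assms(2)] by auto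
  moreover have "card {{w,a},{w,b}} = 2" using ab(1) by (simp add: doubleton_eq_iff)
  moreover have "finite {e\<in>E. w \<in> e}" using assms(1) by simp
  ultimately show ?thesis unfolding degree_def by (metis card_mono)
qed



lemma ear_interior_iff: "x \<in> ear_interior xs \<longleftrightarrow> (\<exists>i. 0 < i \<and> Suc i < length xs \<and> x = xs ! i)"
proof
  assume "x \<in> ear_interior xs"
  then obtain j where j: "j < length (butlast (tl xs))" "x = butlast (tl xs) ! j"
    unfolding ear_interior_def by (metis in_set_conv_nth)
  hence "Suc (Suc j) < length xs" by simp
  moreover have "x = xs ! Suc j" using j by (simp add: nth_butlast nth_tl)
  ultimately show "\<exists>i. 0 < i \<and> Suc i < length xs \<and> x = xs ! i" by (intro exI[of _ "Suc j"]) simp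
next
  assume "\<exists>i. 0 < i \<and> Suc i < length xs \<and> x = xs ! i"
  then obtain i where i: "0 < i" "Suc i < length xs" "x = xs ! i" by blast
  then obtain j where ij: "i = Suc j" by (cases i) auto
  have "j < length (butlast (tl xs))" using i ij by simp
  moreover have "butlast (tl xs) ! j = x" using i ij by (simp add: nth_butlast nth_tl)
  ultimately show "x \<in> ear_interior xs" unfolding ear_interior_def by (metis nth_mem)
qed

lemma ear_edge_in: "strict_ear E xs \<Longrightarrow> Suc i < length xs \<Longrightarrow> {xs!i, xs!Suc i} \<in> E"
  unfolding strict_ear_def by blast

lemma ear_nbrs:
  assumes "finite E" "strict_ear E xs" "0 < i" "Suc i < length xs"
  shows "{e\<in>E. xs!i \<in> e} = {{xs!(i-1), xs!i}, {xs!i, xs!Suc i}}"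
proof -
  have d: "distinct xs" and deg: "degree E (xs!i) = 2" using assms(2-4) unfolding strict_ear_def by auto
  have e1: "{xs!(i-1), xs!i} \<in> E" using ear_edge_in[OF assms(2), of "i-1"] assms by simp
  have e2: "{xs!i, xs!Suc i} \<in> E" using ear_edge_in[OF assms(2), of i] assms by simp
  have "xs!(i-1) \<noteq> xs!Suc i" using d assms by (simp add: nth_eq_iff_index_eq)
  hence "{xs!(i-1), xs!i} \<noteq> {xs!i, xs!Suc i}" using d assms by (auto simp: doubleton_eq_iff nth_eq_iff_index_eq)
  hence c2: "card {{xs!(i-1), xs!i}, {xs!i, xs!Suc i}} = 2" by simp
  have sub: "{{xs!(i-1), xs!i}, {xs!i, xs!Suc i}} \<subseteq> {e\<in>E. xs!i \<in> e}" using e1 e2 by auto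
  have "card {e\<in>E. xs!i \<in> e} = 2" using deg unfolding degree_def .
  thus ?thesis using card_subset_eq[OF _ sub] c2 assms(1) by simp
qed

lemma two_sets_eq:
  assumes "card A = 2" "B \<subseteq> A" "card B = 2" "finite A"
  shows "B = A"
  using assms card_subset_eq by metis

lemma ear_cycle_step:
  assumes "finite E" "strict_ear E xs" "is_cycle E vs" "0 < i" "Suc i < length xs" "xs!i \<in> set vs"
  shows "{xs!(i-1), xs!i} \<in> cycle_edges vs \<and> {xs!i, xs!Suc i} \<in> cycle_edges vs"
proof -
  let ?w = "xs!i"
  obtain a b where ab: "a \<noteq> b" "{?w,a} \<in> cycle_edges vs" "{?w,b} \<in> cycle_edges vs" "?w \<noteq> a" "?w \<noteq> b"
    using cycle_two_edges[OF assms(3,6)] by blast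
  let ?N = "{e\<in>E. ?w \<in> e}"
  have N: "?N = {{xs!(i-1), ?w}, {?w, xs!Suc i}}" by (rule ear_nbrs[OF assms(1,2,4,5)])
  have c: "card ?N = 2" using assms(2,4,5) unfolding strict_ear_def degree_def by auto
  have sub: "{{?w,a},{?w,b}} \<subseteq> ?N" using ab cycle_edges_sub[OF assms(3)] by auto
  have "{?w,a} \<noteq> {?w,b}" using ab by (auto simp: doubleton_eq_iff)
  hence "card {{?w,a},{?w,b}} = 2" by simp
  hence "{{?w,a},{?w,b}} = ?N" using two_sets_eq[OF c sub] assms(1) by simp
  hence "{{?w,a},{?w,b}} = {{xs!(i-1), ?w}, {?w, xs!Suc i}}" using N by simp
  hence "{xs!(i-1), ?w} \<in> {{?w,a},{?w,b}}" "{?w, xs!Suc i} \<in> {{?w,a},{?w,b}}" by auto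
  thus ?thesis using ab by auto
qed

lemma ear_cycle_all:
  assumes "finite E" "strict_ear E xs" "is_cycle E vs" "0 < i0" "Suc i0 < length xs" "xs!i0 \<in> set vs"
  shows "(\<forall>j. Suc j < length xs \<longrightarrow> {xs!j, xs!Suc j} \<in> cycle_edges vs) \<and> set xs \<subseteq> set vs"
proof -
  have step: "\<And>i. 0 < i \<Longrightarrow> Suc i < length xs \<Longrightarrow> xs!i \<in> set vs \<Longrightarrow>
     {xs!(i-1), xs!i} \<in> cycle_edges vs \<and> {xs!i, xs!Suc i} \<in> cycle_edges vs"
    using ear_cycle_step[OF assms(1-3)] by blast
  have up: "\<And>d. i0 + d < length xs \<Longrightarrow> xs!(i0+d) \<in> set vs"
  proof -
    fix d show "i0 + d < length xs \<Longrightarrow> xs!(i0+d) \<in> set vs"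
    proof (induction d)
      case 0 thus ?case using assms(6) by simp
    next
      case (Suc d)
      hence "xs!(i0+d) \<in> set vs" by simp
      hence "{xs!(i0+d), xs!Suc (i0+d)} \<in> cycle_edges vs" using step[of "i0+d"] Suc.prems assms(4) by simp
      thus ?case using cycle_edges_verts by fastforce
    qed
  qed
  have down: "\<And>d. d \<le> i0 \<Longrightarrow> xs!(i0-d) \<in> set vs"
  proof -
    fix d show "d \<le> i0 \<Longrightarrow> xs!(i0-d) \<in> set vs"
    proof (induction d)
      case 0 thus ?case using assms(6) by simp
    next
      case (Suc d)
      hence "xs!(i0-d) \<in> set vs" by simp
      moreover have "0 < i0 - d" "Suc (i0 - d) < length xs" using Suc.prems assms(5) by auto
      ultimately have "{xs!(i0-d-1), xs!(i0-d)} \<in> cycle_edges vs" using step[of "i0-d"] by simp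
      moreover have "i0 - d - 1 = i0 - Suc d" by simp
      ultimately show ?case using cycle_edges_verts by fastforce
    qed
  qed
  have all: "\<And>j. j < length xs \<Longrightarrow> xs!j \<in> set vs"
  proof -
    fix j assume j: "j < length xs"
    show "xs!j \<in> set vs"
    proof (cases "i0 \<le> j")
      case True thus ?thesis using up[of "j - i0"] j by simp
    next
      case False thus ?thesis using down[of "i0 - j"] by simp
    qed
  qed
  have edges: "\<forall>j. Suc j < length xs \<longrightarrow> {xs!j, xs!Suc j} \<in> cycle_edges vs"
  proof (intro allI impI)
    fix j assume j: "Suc j < length xs"
    show "{xs!j, xs!Suc j} \<in> cycle_edges vs"
    proof (cases j)
      case 0
      have "2 < length xs" using assms(4,5) by simp
      thus ?thesis using step[of 1] all[of 1] 0 by simp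
    next
      case (Suc j')
      thus ?thesis using step[of j] all[of j] j by simp
    qed
  qed
  have "set xs \<subseteq> set vs" using all by (auto simp: in_set_conv_nth)
  thus ?thesis using edges by blast
qed



lemma seq_color:
  assumes "3 \<le> m" "m \<le> k" "m + 1 \<le> L" "\<alpha> < k" "\<beta> < k"
  shows "\<exists>col. col 0 = \<alpha> \<and> col (L-1) = \<beta> \<and> (\<forall>i<L. col i < k) \<and>
     (\<forall>i. Suc i < L \<longrightarrow> col i \<noteq> col (Suc i)) \<and> m \<le> card (col ` {..<L})"
proof -
  define D where "D = filter (\<lambda>x. x \<noteq> \<alpha> \<and> x \<noteq> \<beta>) [0..<k]"
  have dD: "distinct D" unfolding D_def by simp
  have setD: "set D = {0..<k} - {\<alpha>,\<beta>}" unfolding D_def by auto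
  have lenD: "length D = k - card {\<alpha>,\<beta>}"
  proof -
    have "length D = card (set D)" using dD by (simp add: distinct_card)
    also have "\<dots> = k - card {\<alpha>,\<beta>}" unfolding setD using assms(4,5)
      by (subst card_Diff_subset) auto
    finally show ?thesis .
  qed
  define t where "t = (if \<alpha> = \<beta> then m - 1 else m - 2)"
  have t1: "1 \<le> t" and tL: "t + 2 \<le> L" and tD: "t \<le> length D" and t2: "\<alpha> = \<beta> \<Longrightarrow> 2 \<le> t"
    and tm: "card {\<alpha>,\<beta>} + t = m"
    using assms lenD unfolding t_def by (auto split: if_splits)
  have Dj: "\<And>j. j < t \<Longrightarrow> D!j < k \<and> D!j \<noteq> \<alpha> \<and> D!j \<noteq> \<beta>"
  proof -
    fix j assume "j < t"
    hence "D!j \<in> set D" using tD by simp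
    thus "D!j < k \<and> D!j \<noteq> \<alpha> \<and> D!j \<noteq> \<beta>" unfolding setD by auto
  qed
  have Ddist: "\<And>i j. i < t \<Longrightarrow> j < t \<Longrightarrow> i \<noteq> j \<Longrightarrow> D!i \<noteq> D!j"
    using dD tD by (simp add: nth_eq_iff_index_eq)
  define u where "u = (if \<alpha> = \<beta> then D!(t-2) else \<alpha>)"
  have u: "u < k" "u \<noteq> \<beta>" "u \<noteq> D!(t-1)"
  proof -
    show "u < k" using Dj[of "t-2"] t1 assms(4) unfolding u_def by auto
    show "u \<noteq> \<beta>" using Dj[of "t-2"] t1 unfolding u_def by auto
    show "u \<noteq> D!(t-1)"
    proof (cases "\<alpha> = \<beta>")
      case True thus ?thesis using Ddist[of "t-2" "t-1"] t2 unfolding u_def by auto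
    next
      case False thus ?thesis using Dj[of "t-1"] t1 unfolding u_def by auto
    qed
  qed
  define col where "col i = (if i = 0 then \<alpha> else if i = L-1 then \<beta> else if i \<le> t then D!(i-1)
      else if odd (i-t) then u else D!(t-1))" for i
  have c0: "col 0 = \<alpha>" unfolding col_def by simp
  have cL: "col (L-1) = \<beta>" unfolding col_def using tL by simp
  have range: "\<forall>i<L. col i < k"
  proof (intro allI impI)
    fix i assume "i < L"
    show "col i < k" unfolding col_def using assms(4,5) u Dj[of "i-1"] Dj[of "t-1"] t1 by auto
  qed
  have adj: "\<forall>i. Suc i < L \<longrightarrow> col i \<noteq> col (Suc i)"
  proof (intro allI impI)
    fix i assume i: "Suc i < L"
    show "col i \<noteq> col (Suc i)"
    proof (cases "i = 0")
      case True
      have "L - 1 \<noteq> 1" using assms(1,3) by simp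
      hence "col 1 = D!0" unfolding col_def using t1 by simp
      thus ?thesis using True c0 Dj[of 0] t1 by simp
    next
      case False
      note i0 = False
      show ?thesis
      proof (cases "Suc i = L - 1")
        case True
        have "L - 1 \<noteq> 0" using True by linarith
        hence "col (Suc i) = \<beta>" unfolding col_def using True by simp
        moreover have "col i \<noteq> \<beta>" unfolding col_def using i0 True u Dj[of "i-1"] Dj[of "t-1"] t1
          by auto
        ultimately show ?thesis by simp
      next
        case False
        show ?thesis
        proof (cases "Suc i \<le> t")
          case True
          hence "col i = D!(i-1)" "col (Suc i) = D!i" unfolding col_def using i0 False i by auto
          thus ?thesis using Ddist[of "i-1" i] True i0 by simp
        next
          case nt: False
          show ?thesis
          proof (cases "i = t")
            case True
            hence "col i = D!(t-1)" "col (Suc i) = u" unfolding col_def using i0 False i by auto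
            thus ?thesis using u by simp
          next
            case False
            hence gt: "t < i" using nt by simp
            have "odd (Suc i - t) \<longleftrightarrow> \<not> odd (i - t)" using gt by (simp add: Suc_diff_le)
            thus ?thesis unfolding col_def using i0 gt \<open>Suc i \<noteq> L - 1\<close> i u by auto
          qed
        qed
      qed
    qed
  qed
  have sub: "{\<alpha>,\<beta>} \<union> (\<lambda>j. D!j) ` {..<t} \<subseteq> col ` {..<L}"
  proof -
    have "\<alpha> \<in> col ` {..<L}" using c0 tL by (metis image_eqI lessThan_iff add_leD2 le_trans
        less_numeral_extra(1) not_less zero_less_numeral less_le_trans)
    moreover have "\<beta> \<in> col ` {..<L}" using cL tL by (intro image_eqI[of _ _ "L-1"]) auto
    moreover have "\<And>j. j < t \<Longrightarrow> D!j \<in> col ` {..<L}"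
    proof -
      fix j assume j: "j < t"
      have "col (Suc j) = D!j" unfolding col_def using j tL by auto
      moreover have "Suc j < L" using j tL by simp
      ultimately show "D!j \<in> col ` {..<L}" by (metis image_eqI lessThan_iff)
    qed
    ultimately show ?thesis by blast
  qed
  have "card ({\<alpha>,\<beta>} \<union> (\<lambda>j. D!j) ` {..<t}) = card {\<alpha>,\<beta>} + card ((\<lambda>j. D!j) ` {..<t})"
    by (rule card_Un_disjoint) (use Dj in auto)
  moreover have "card ((\<lambda>j. D!j) ` {..<t}) = t"
    by (subst card_image) (auto intro!: inj_onI dest: Ddist)
  ultimately have "card ({\<alpha>,\<beta>} \<union> (\<lambda>j. D!j) ` {..<t}) = m" using tm by simp
  hence "m \<le> card (col ` {..<L})" using card_mono[OF _ sub] by simp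
  thus ?thesis using c0 cL range adj by blast
qed



lemma no_cycle_empty: "\<not> is_cycle {} vs"
proof
  assume "is_cycle {} vs"
  hence h: "3 \<le> length vs" "\<forall>i < length vs. {vs ! i, vs ! ((i + 1) mod length vs)} \<in> ({}::'a set set)"
    unfolding is_cycle_def by blast+
  have "0 < length vs" using h(1) by linarith
  thus False using h(2) by blast
qed

lemma reduction_cases:
  assumes "p_reduction p V E V' E'" "simple_graph V E"
  obtains S where "(V', E') = delete_vertices S V E"
    "\<And>vs. is_cycle E vs \<Longrightarrow> set vs \<inter> S \<noteq> {} \<Longrightarrow> p + 1 \<le> length vs"
  using assms(1)
proof cases
  case (isolated v)
  show ?thesis
  proof (rule that[of "{v}"])
    show "(V', E') = delete_vertices {v} V E" by fact
    fix vs assume "is_cycle E vs" "set vs \<inter> {v} \<noteq> {}"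
    hence "v \<in> set vs" by blast
    hence "degree E v \<ge> 2" by (rule cycle_degree[OF sg_finite_E[OF assms(2)] \<open>is_cycle E vs\<close>])
    thus "p + 1 \<le> length vs" using isolated by simp
  qed
next
  case (leaf v)
  show ?thesis
  proof (rule that[of "{v}"])
    show "(V', E') = delete_vertices {v} V E" by fact
    fix vs assume "is_cycle E vs" "set vs \<inter> {v} \<noteq> {}"
    hence "v \<in> set vs" by blast
    hence "degree E v \<ge> 2" by (rule cycle_degree[OF sg_finite_E[OF assms(2)] \<open>is_cycle E vs\<close>])
    thus "p + 1 \<le> length vs" using leaf by simp
  qed
next
  case (ear xs)
  show ?thesis
  proof (rule that[of "ear_interior xs"])
    show "(V', E') = delete_vertices (ear_interior xs) V E" by fact
    fix vs assume cyc: "is_cycle E vs" "set vs \<inter> ear_interior xs \<noteq> {}"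
    then obtain w where w: "w \<in> set vs" "w \<in> ear_interior xs" by blast
    then obtain i where i: "0 < i" "Suc i < length xs" "w = xs!i"
      using ear_interior_iff by metis
    have i3: "xs!i \<in> set vs" using w i by simp
    have "set xs \<subseteq> set vs" using ear_cycle_all[OF sg_finite_E[OF assms(2)] ear(1) cyc(1) i(1,2) i3] by (rule conjunct2)
    hence "card (set xs) \<le> card (set vs)" by (simp add: card_mono)
    also have "\<dots> \<le> length vs" by (rule card_length)
    finally have "length xs \<le> length vs" using ear(1) unfolding strict_ear_def by (simp add: distinct_card)
    thus "p + 1 \<le> length vs" using ear(3) i(2) by linarith
  qed
qed

lemma cycle_long:
  assumes "path_degenerate p V E" "simple_graph V E" "is_cycle E vs"
  shows "p + 1 \<le> length vs"
  using assms
proof (induction arbitrary: vs rule: path_degenerate.induct)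
  case empty thus ?case using no_cycle_empty by blast
next
  case (step V E V' E')
  obtain S where S: "(V', E') = delete_vertices S V E"
    "\<And>vs. is_cycle E vs \<Longrightarrow> set vs \<inter> S \<noteq> {} \<Longrightarrow> p + 1 \<le> length vs"
    using reduction_cases[OF step(1,4)] by blast
  have VE: "V' = V - S" "E' = {e\<in>E. e \<inter> S = {}}" using S(1) unfolding delete_vertices_def by auto
  show ?case
  proof (cases "set vs \<inter> S = {}")
    case True
    hence "is_cycle E' vs" using cycle_avoid[OF step(5)] VE by simp
    moreover have "simple_graph V' E'" using sg_delete[OF step(4)] VE by simp
    ultimately show ?thesis using step(3) by blast
  next
    case False thus ?thesis using S(2) step(5) by blast
  qed
qed

lemma coloring_degree:
  assumes "finite E" "proper_edge_coloring E c" "c ` E \<subseteq> {0..<k}"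
  shows "degree E v \<le> k"
proof -
  let ?A = "{e\<in>E. v \<in> e}"
  have "inj_on c ?A" using assms(2) unfolding proper_edge_coloring_def inj_on_def by blast
  hence "card ?A = card (c ` ?A)" by (simp add: card_image)
  also have "\<dots> \<le> card {0..<k}" by (rule card_mono) (use assms(3) in auto)
  finally show ?thesis unfolding degree_def by simp
qed

lemma coloring_maxdeg:
  assumes "simple_graph V E" "r_acyclic_edge_coloring r E k c"
  shows "max_degree V E \<le> k"
proof -
  have fV: "finite V" using assms(1) unfolding simple_graph_def by simp
  have "\<forall>v\<in>V. degree E v \<le> k" using coloring_degree[OF sg_finite_E[OF assms(1)]] assms(2)
    unfolding r_acyclic_edge_coloring_def by blast
  thus ?thesis unfolding max_degree_def using fV by simp
qed

lemma coloring_cycle: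
  assumes "r_acyclic_edge_coloring r E k c" "is_cycle E vs" "r \<le> length vs"
  shows "r \<le> k"
proof -
  have "r \<le> card (c ` cycle_edges vs)" using assms unfolding r_acyclic_edge_coloring_def by auto
  also have "\<dots> \<le> card {0..<k}"
    by (rule card_mono) (use assms(1) cycle_edges_sub[OF assms(2)] in \<open>auto simp: r_acyclic_edge_coloring_def\<close>)
  finally show ?thesis by simp
qed



definition good :: "nat \<Rightarrow> 'a set set \<Rightarrow> nat \<Rightarrow> ('a set \<Rightarrow> nat) \<Rightarrow> bool" where
  "good r E k c \<longleftrightarrow> c ` E \<subseteq> {0..<k} \<and> proper_edge_coloring E c \<and>
     (\<forall>vs. is_cycle E vs \<longrightarrow> min r k \<le> card (c ` cycle_edges vs))"

lemma pick_color:
  assumes "finite A" "card A < k"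
  shows "\<exists>\<alpha><k. \<alpha> \<notin> A"
proof (rule ccontr)
  assume "\<not> (\<exists>\<alpha><k. \<alpha> \<notin> A)"
  hence "{0..<k} \<subseteq> A" by auto
  hence "card {0..<k} \<le> card A" using assms(1) by (rule card_mono[rotated])
  thus False using assms(2) by simp
qed

lemma leaf_step:
  assumes sg: "simple_graph V E" and vV: "v \<in> V" and dv: "degree E v = 1"
    and degk: "\<forall>w\<in>V. degree E w \<le> k" and k3: "3 \<le> k"
    and E': "E' = {e\<in>E. e \<inter> {v} = {}}" and g: "good r E' k c"
  shows "\<exists>c'. good r E k c'"
proof -
  have fin: "finite E" using sg_finite_E[OF sg] .
  have "card {e\<in>E. v \<in> e} = 1" using dv unfolding degree_def .
  then obtain e0 where N: "{e\<in>E. v \<in> e} = {e0}" by (rule card_1_singletonE)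
  hence e0: "e0 \<in> E" "v \<in> e0" by auto
  obtain a b where ab: "e0 = {a,b}" "a \<noteq> b" "a \<in> V" "b \<in> V" using sg_edge[OF sg e0(1)] by blast
  obtain u where u: "e0 = {v,u}" "u \<noteq> v" "u \<in> V"
  proof (cases "a = v")
    case True thus ?thesis using that ab by blast
  next
    case False hence "b = v" using ab e0(2) by blast
    thus ?thesis using that ab False by (metis insert_commute)
  qed
  have E'eq: "\<And>e. e \<in> E' \<longleftrightarrow> e \<in> E \<and> e \<noteq> e0"
  proof -
    fix e
    have "e \<in> E' \<longleftrightarrow> e \<in> E \<and> v \<notin> e" unfolding E' by blast
    also have "\<dots> \<longleftrightarrow> e \<in> E \<and> e \<noteq> e0" using N e0 by blast
    finally show "e \<in> E' \<longleftrightarrow> e \<in> E \<and> e \<noteq> e0" .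
  qed
  let ?Nu = "{e\<in>E'. u \<in> e}"
  have "?Nu = {e\<in>E. u \<in> e} - {e0}" using E'eq by blast
  hence "card ?Nu = degree E u - 1" unfolding degree_def using fin u(1) e0(1) by simp
  moreover have "degree E u \<le> k" using degk u(3) by blast
  moreover have "0 < degree E u"
  proof -
    have "e0 \<in> {e\<in>E. u \<in> e}" using u(1) e0(1) by blast
    hence "{e\<in>E. u \<in> e} \<noteq> {}" by blast
    thus ?thesis unfolding degree_def using fin by (simp add: card_gt_0_iff)
  qed
  ultimately have "card ?Nu < k" by linarith
  moreover have "card (c ` ?Nu) \<le> card ?Nu" using fin E' by (intro card_image_le) simp
  ultimately have "card (c ` ?Nu) < k" by linarith
  moreover have "finite (c ` ?Nu)" using fin E' by simp
  ultimately obtain \<alpha> where al: "\<alpha> < k" "\<alpha> \<notin> c ` ?Nu" using pick_color[of "c ` ?Nu" k] by blast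
  define c' where "c' = c(e0 := \<alpha>)"
  have gE': "c ` E' \<subseteq> {0..<k}" "proper_edge_coloring E' c"
     "\<forall>vs. is_cycle E' vs \<longrightarrow> min r k \<le> card (c ` cycle_edges vs)" using g unfolding good_def by auto
  have range: "c' ` E \<subseteq> {0..<k}"
  proof
    fix z assume "z \<in> c' ` E"
    then obtain e where e: "e \<in> E" "z = c' e" by blast
    show "z \<in> {0..<k}"
    proof (cases "e = e0")
      case True thus ?thesis using e al by (simp add: c'_def)
    next
      case False hence "e \<in> E'" using E'eq e by blast
      thus ?thesis using e gE'(1) False by (auto simp: c'_def)
    qed
  qed
  have mixed: "\<And>f. f \<in> E \<Longrightarrow> f \<noteq> e0 \<Longrightarrow> e0 \<inter> f \<noteq> {} \<Longrightarrow> c' e0 \<noteq> c' f"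
  proof -
    fix f assume f: "f \<in> E" "f \<noteq> e0" "e0 \<inter> f \<noteq> {}"
    hence fE': "f \<in> E'" using E'eq by blast
    hence "v \<notin> f" unfolding E' by blast
    hence "u \<in> f" using f(3) u(1) by blast
    hence "f \<in> ?Nu" using fE' by blast
    hence "c f \<noteq> \<alpha>" using al(2) by blast
    thus "c' e0 \<noteq> c' f" using f(2) by (simp add: c'_def)
  qed
  have proper: "proper_edge_coloring E c'"
    unfolding proper_edge_coloring_def
  proof (intro ballI impI)
    fix e f assume ef: "e \<in> E" "f \<in> E" "e \<noteq> f \<and> e \<inter> f \<noteq> {}"
    show "c' e \<noteq> c' f"
    proof (cases "e = e0")
      case True thus ?thesis using mixed ef by blast
    next
      case ne: False
      show ?thesis
      proof (cases "f = e0")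
        case True thus ?thesis using mixed[of e] ef ne by (metis inf_commute)
      next
        case False
        hence "e \<in> E'" "f \<in> E'" using ne E'eq ef by blast+
        hence "c e \<noteq> c f" using gE'(2) ef unfolding proper_edge_coloring_def by blast
        thus ?thesis using ne False by (simp add: c'_def)
      qed
    qed
  qed
  have cyc: "\<forall>vs. is_cycle E vs \<longrightarrow> min r k \<le> card (c' ` cycle_edges vs)"
  proof (intro allI impI)
    fix vs assume cv: "is_cycle E vs"
    have "v \<notin> set vs"
    proof
      assume "v \<in> set vs"
      hence "2 \<le> degree E v" by (rule cycle_degree[OF fin cv])
      thus False using dv by simp
    qed
    hence "set vs \<inter> {v} = {}" by blast
    hence cv': "is_cycle E' vs" unfolding E' by (rule cycle_avoid[OF cv])
    have "cycle_edges vs \<subseteq> E'" by (rule cycle_edges_sub[OF cv'])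
    hence "e0 \<notin> cycle_edges vs" using E'eq by blast
    hence "c' ` cycle_edges vs = c ` cycle_edges vs" unfolding c'_def by (intro image_cong) auto
    thus "min r k \<le> card (c' ` cycle_edges vs)" using gE'(3) cv' by simp
  qed
  show ?thesis using range proper cyc unfolding good_def by blast
qed



lemma ear_step:
  assumes sg: "simple_graph V E" and ear: "strict_ear E xs" and xsV: "set xs \<subseteq> V"
    and len: "r + 1 \<le> length xs - 1" and r3: "3 \<le> r"
    and degk: "\<forall>w\<in>V. degree E w \<le> k" and k3: "3 \<le> k"
    and E': "E' = {e\<in>E. e \<inter> ear_interior xs = {}}" and g: "good r E' k c"
  shows "\<exists>c'. good r E k c'"
proof -
  have fin: "finite E" using sg_finite_E[OF sg] .
  define S where "S = ear_interior xs"
  define n where "n = length xs"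
  define L where "L = n - 1"
  define edge where "edge j = {xs!j, xs!Suc j}" for j
  have dxs: "distinct xs" using ear unfolding strict_ear_def by simp
  have n5: "5 \<le> n" "L + 1 = n" using len r3 unfolding n_def L_def by auto
  have idx: "\<And>a b. a < n \<Longrightarrow> b < n \<Longrightarrow> xs!a = xs!b \<longleftrightarrow> a = b"
    using dxs unfolding n_def by (simp add: nth_eq_iff_index_eq)
  have S_iff: "\<And>w. w \<in> S \<longleftrightarrow> (\<exists>i. 0 < i \<and> Suc i < n \<and> w = xs!i)" unfolding S_def n_def
    by (rule ear_interior_iff)
  have inS: "\<And>i. 0 < i \<Longrightarrow> Suc i < n \<Longrightarrow> xs!i \<in> S"
  proof -
    fix i assume "0 < i" "Suc i < n"
    hence "\<exists>i'. 0 < i' \<and> Suc i' < n \<and> xs!i = xs!i'" by blast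
    thus "xs!i \<in> S" using S_iff by simp
  qed
  have edge_in: "\<And>j. j < L \<Longrightarrow> edge j \<in> E" unfolding edge_def
    using ear_edge_in[OF ear] n5 unfolding n_def by simp
  have edge_hits: "\<And>j. j < L \<Longrightarrow> edge j \<inter> S \<noteq> {}"
  proof -
    fix j assume j: "j < L"
    show "edge j \<inter> S \<noteq> {}"
    proof (cases j)
      case 0
      have "xs!1 \<in> S" using inS[of 1] n5 by simp
      thus ?thesis unfolding edge_def using 0 by auto
    next
      case (Suc j')
      hence "xs!j \<in> S" using inS[of j] j n5 by simp
      thus ?thesis unfolding edge_def by auto
    qed
  qed
  have E'iff: "\<And>e. e \<in> E' \<longleftrightarrow> e \<in> E \<and> e \<inter> S = {}" unfolding E' S_def by blast
  have edge_notE': "\<And>j. j < L \<Longrightarrow> edge j \<notin> E'" using edge_hits E'iff by blast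
  have split: "\<And>e. e \<in> E \<Longrightarrow> e \<notin> E' \<Longrightarrow> \<exists>j<L. e = edge j"
  proof -
    fix e assume e: "e \<in> E" "e \<notin> E'"
    then obtain w where w: "w \<in> e" "w \<in> S" using E'iff by blast
    then obtain i where i: "0 < i" "Suc i < n" "w = xs!i" using S_iff by blast
    have "e \<in> {e\<in>E. xs!i \<in> e}" using e w i by blast
    hence "e \<in> {{xs!(i-1), xs!i}, {xs!i, xs!Suc i}}" using ear_nbrs[OF fin ear i(1)] i(2) unfolding n_def by simp
    hence "e = edge (i-1) \<or> e = edge i" unfolding edge_def using i(1) by auto
    moreover have "i - 1 < L" "i < L" using i n5 by linarith+
    ultimately show "\<exists>j<L. e = edge j" by blast
  qed
  have edge_inter: "\<And>i j. i < L \<Longrightarrow> j < L \<Longrightarrow> edge i \<inter> edge j \<noteq> {} \<Longrightarrow> i = j \<or> Suc i = j \<or> Suc j = i"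
  proof -
    fix i j assume ij: "i < L" "j < L" "edge i \<inter> edge j \<noteq> {}"
    then obtain w where "w \<in> edge i" "w \<in> edge j" by blast
    hence "(xs!i = xs!j \<or> xs!i = xs!Suc j \<or> xs!Suc i = xs!j \<or> xs!Suc i = xs!Suc j)"
      unfolding edge_def by auto
    moreover have "i < n" "Suc i < n" "j < n" "Suc j < n" using ij n5 by linarith+
    ultimately show "i = j \<or> Suc i = j \<or> Suc j = i" by (auto simp: idx)
  qed
  have edge_inj: "inj_on edge {..<L}"
  proof (rule inj_onI)
    fix i j assume ij: "i \<in> {..<L}" "j \<in> {..<L}" "edge i = edge j"
    have r: "i < n" "Suc i < n" "j < n" "Suc j < n" using ij n5 by auto
    have "xs!i \<in> edge j" using ij(3) unfolding edge_def by auto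
    hence "xs!i = xs!j \<or> xs!i = xs!Suc j" unfolding edge_def by simp
    hence a: "i = j \<or> i = Suc j" using r by (simp add: idx)
    have "xs!Suc i \<in> edge j" using ij(3) unfolding edge_def by auto
    hence "xs!Suc i = xs!j \<or> xs!Suc i = xs!Suc j" unfolding edge_def by simp
    hence b: "Suc i = j \<or> Suc i = Suc j" using r by (simp add: idx)
    show "i = j" using a b by auto
  qed
  define x where "x = xs!0"
  define y where "y = xs!L"
  have xV: "x \<in> V" "y \<in> V"
  proof -
    have "0 < length xs" "L < length xs" using n5 unfolding n_def by linarith+
    hence "xs!0 \<in> set xs" "xs!L \<in> set xs" by (meson nth_mem)+
    thus "x \<in> V" "y \<in> V" using xsV unfolding x_def y_def by auto
  qed
  have e0: "x \<in> edge 0" "edge 0 \<in> E" using edge_in n5 unfolding x_def edge_def by auto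
  have eL: "y \<in> edge (L-1)" "edge (L-1) \<in> E" using edge_in[of "L-1"] n5 unfolding y_def edge_def by auto
  have small: "\<And>z e. z \<in> V \<Longrightarrow> z \<in> e \<Longrightarrow> e \<in> E \<Longrightarrow> e \<notin> E' \<Longrightarrow> card (c ` {f\<in>E'. z \<in> f}) < k"
  proof -
    fix z e assume z: "z \<in> V" "z \<in> e" "e \<in> E" "e \<notin> E'"
    have sub: "{f\<in>E'. z \<in> f} \<subseteq> {f\<in>E. z \<in> f} - {e}" using z E'iff by blast
    have "card (c ` {f\<in>E'. z \<in> f}) \<le> card {f\<in>E'. z \<in> f}" using fin E'iff
      by (intro card_image_le) (simp add: E')
    also have "\<dots> \<le> card ({f\<in>E. z \<in> f} - {e})" using fin by (intro card_mono[OF _ sub]) simp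
    also have "\<dots> = degree E z - 1" unfolding degree_def using z fin by simp
    also have "\<dots> < k"
    proof -
      have "degree E z \<le> k" using degk z by blast
      moreover have "0 < degree E z" unfolding degree_def using z fin by (auto simp: card_gt_0_iff)
      ultimately show ?thesis by linarith
    qed
    finally show "card (c ` {f\<in>E'. z \<in> f}) < k" .
  qed
  have fin': "\<And>z. finite (c ` {f\<in>E'. z \<in> f})" using fin by (simp add: E')
  obtain \<alpha> where al: "\<alpha> < k" "\<alpha> \<notin> c ` {f\<in>E'. x \<in> f}"
    using pick_color[OF fin' small[OF xV(1) e0(1) e0(2) edge_notE'[of 0]]] n5 by auto
  obtain \<beta> where be: "\<beta> < k" "\<beta> \<notin> c ` {f\<in>E'. y \<in> f}"
    using pick_color[OF fin' small[OF xV(2) eL(1) eL(2) edge_notE'[of "L-1"]]] n5 by auto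
  define m where "m = min r k"
  have m: "3 \<le> m" "m \<le> k" "m + 1 \<le> L" using r3 k3 len n5 unfolding m_def L_def n_def by auto
  obtain col where col: "col 0 = \<alpha>" "col (L-1) = \<beta>" "\<forall>i<L. col i < k"
     "\<forall>i. Suc i < L \<longrightarrow> col i \<noteq> col (Suc i)" "m \<le> card (col ` {..<L})"
    using seq_color[OF m al(1) be(1)] by blast
  define c' where "c' e = (if e \<in> E' then c e else col (the_inv_into {..<L} edge e))" for e
  have c'e: "\<And>j. j < L \<Longrightarrow> c' (edge j) = col j"
    unfolding c'_def using edge_notE' the_inv_into_f_f[OF edge_inj] by simp
  have c'E': "\<And>e. e \<in> E' \<Longrightarrow> c' e = c e" unfolding c'_def by simp
  have gE': "c ` E' \<subseteq> {0..<k}" "proper_edge_coloring E' c"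
     "\<forall>vs. is_cycle E' vs \<longrightarrow> min r k \<le> card (c ` cycle_edges vs)" using g unfolding good_def by auto
  have range: "c' ` E \<subseteq> {0..<k}"
  proof
    fix z assume "z \<in> c' ` E"
    then obtain e where e: "e \<in> E" "z = c' e" by blast
    show "z \<in> {0..<k}"
    proof (cases "e \<in> E'")
      case True thus ?thesis using e gE'(1) c'E' by auto
    next
      case False
      then obtain j where "j < L" "e = edge j" using split e by blast
      thus ?thesis using e c'e col(3) by auto
    qed
  qed
  have mixed: "\<And>i f. i < L \<Longrightarrow> f \<in> E' \<Longrightarrow> edge i \<inter> f \<noteq> {} \<Longrightarrow> c' (edge i) \<noteq> c' f"
  proof -
    fix i f assume a: "i < L" "f \<in> E'" "edge i \<inter> f \<noteq> {}"
    then obtain w where w: "w \<in> edge i" "w \<in> f" by blast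
    have wS: "w \<notin> S" using w a(2) E'iff by blast
    have "(i = 0 \<and> w = x) \<or> (i = L - 1 \<and> w = y)"
    proof (cases "w = xs!i")
      case True
      have "i = 0"
      proof (rule ccontr)
        assume "i \<noteq> 0"
        hence "xs!i \<in> S" using inS[of i] a(1) n5 by simp
        thus False using wS True by simp
      qed
      thus ?thesis using True unfolding x_def by simp
    next
      case False
      hence wi: "w = xs!Suc i" using w unfolding edge_def by auto
      have "Suc i = L"
      proof (rule ccontr)
        assume "Suc i \<noteq> L"
        hence "xs!Suc i \<in> S" using inS[of "Suc i"] a(1) n5 by simp
        thus False using wS wi by simp
      qed
      hence "i = L - 1" by linarith
      thus ?thesis using wi \<open>Suc i = L\<close> unfolding y_def by simp
    qed
    thus "c' (edge i) \<noteq> c' f"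
    proof
      assume h: "i = 0 \<and> w = x"
      have "c f \<in> c ` {f\<in>E'. x \<in> f}" using a(2) w h by blast
      thus ?thesis using c'e[OF a(1)] c'E'[OF a(2)] h col(1) al(2) by auto
    next
      assume h: "i = L - 1 \<and> w = y"
      have "c f \<in> c ` {f\<in>E'. y \<in> f}" using a(2) w h by blast
      thus ?thesis using c'e[OF a(1)] c'E'[OF a(2)] h col(2) be(2) by auto
    qed
  qed
  have proper: "proper_edge_coloring E c'"
    unfolding proper_edge_coloring_def
  proof (intro ballI impI)
    fix e f assume ef: "e \<in> E" "f \<in> E" "e \<noteq> f \<and> e \<inter> f \<noteq> {}"
    show "c' e \<noteq> c' f"
    proof (cases "e \<in> E'")
      case eE: True
      show ?thesis
      proof (cases "f \<in> E'")
        case True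
        thus ?thesis using eE ef gE'(2) c'E' unfolding proper_edge_coloring_def by metis
      next
        case False
        then obtain j where j: "j < L" "f = edge j" using split ef by blast
        thus ?thesis using mixed[OF j(1) eE] ef by (metis inf_commute)
      qed
    next
      case eN: False
      then obtain i where i: "i < L" "e = edge i" using split ef by blast
      show ?thesis
      proof (cases "f \<in> E'")
        case True
        thus ?thesis using mixed[OF i(1) True] ef i by simp
      next
        case False
        then obtain j where j: "j < L" "f = edge j" using split ef by blast
        have "i \<noteq> j" using i j ef by blast
        hence "Suc i = j \<or> Suc j = i" using edge_inter[OF i(1) j(1)] ef i j by blast
        thus ?thesis using col(4) c'e i j by metis
      qed
    qed
  qed
  have cyc: "\<forall>vs. is_cycle E vs \<longrightarrow> min r k \<le> card (c' ` cycle_edges vs)"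
  proof (intro allI impI)
    fix vs assume cv: "is_cycle E vs"
    show "min r k \<le> card (c' ` cycle_edges vs)"
    proof (cases "set vs \<inter> S = {}")
      case True
      hence cv': "is_cycle E' vs" unfolding E' S_def[symmetric] by (rule cycle_avoid[OF cv])
      have "cycle_edges vs \<subseteq> E'" by (rule cycle_edges_sub[OF cv'])
      hence "c' ` cycle_edges vs = c ` cycle_edges vs" using c'E' by (intro image_cong) auto
      thus ?thesis using gE'(3) cv' by simp
    next
      case False
      then obtain w where w: "w \<in> set vs" "w \<in> S" by blast
      then obtain i where i: "0 < i" "Suc i < n" "w = xs!i" using S_iff by blast
      have "\<forall>j. Suc j < length xs \<longrightarrow> {xs!j, xs!Suc j} \<in> cycle_edges vs"
        using ear_cycle_all[OF fin ear cv i(1)] i w unfolding n_def by blast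
      hence sub: "edge ` {..<L} \<subseteq> cycle_edges vs" unfolding edge_def L_def n_def by auto
      have "col ` {..<L} = c' ` edge ` {..<L}" using c'e by (auto simp: image_iff)
      also have "\<dots> \<subseteq> c' ` cycle_edges vs" using sub by blast
      finally have "card (col ` {..<L}) \<le> card (c' ` cycle_edges vs)"
        by (rule card_mono[rotated]) (simp add: finite_cycle_edges)
      thus ?thesis using col(5) unfolding m_def by simp
    qed
  qed
  show ?thesis using range proper cyc unfolding good_def by blast
qed



lemma upper:
  assumes "path_degenerate p V E" "p = r + 1" "3 \<le> r"
  shows "simple_graph V E \<Longrightarrow> 3 \<le> k \<Longrightarrow> \<forall>w\<in>V. degree E w \<le> k \<Longrightarrow> \<exists>c. good r E k c"
  using assms(1)
proof (induction rule: path_degenerate.induct)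
  case empty
  have "good r {} k (\<lambda>_. 0)" unfolding good_def proper_edge_coloring_def using no_cycle_empty by auto
  thus ?case by blast
next
  case (step V E V' E')
  have fin: "finite E" using sg_finite_E[OF step.prems(1)] .
  have IH: "\<And>S. (V', E') = delete_vertices S V E \<Longrightarrow> \<exists>c. good r E' k c"
  proof -
    fix S assume S: "(V', E') = delete_vertices S V E"
    hence VE: "V' = V - S" "E' = {e\<in>E. e \<inter> S = {}}" unfolding delete_vertices_def by auto
    have "simple_graph V' E'" using sg_delete[OF step.prems(1)] VE by simp
    moreover have "\<forall>w\<in>V'. degree E' w \<le> k"
    proof
      fix w assume "w \<in> V'"
      hence "degree E w \<le> k" using step.prems(3) VE by blast
      moreover have "degree E' w \<le> degree E w" using VE fin by (intro degree_mono) auto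
      ultimately show "degree E' w \<le> k" by linarith
    qed
    ultimately show "\<exists>c. good r E' k c" using step.IH step.prems(2) by blast
  qed
  from step.hyps(1) show ?case
  proof cases
    case (isolated v)
    have VE: "E' = {e\<in>E. e \<inter> {v} = {}}" using isolated(3) unfolding delete_vertices_def by auto
    have "{e\<in>E. v \<in> e} = {}" using isolated(2) fin unfolding degree_def by simp
    hence "E' = E" using VE by blast
    thus ?thesis using IH isolated(3) by blast
  next
    case (leaf v)
    have VE: "E' = {e\<in>E. e \<inter> {v} = {}}" using leaf(3) unfolding delete_vertices_def by auto
    obtain c where "good r E' k c" using IH leaf(3) by blast
    thus ?thesis using leaf_step[OF step.prems(1) leaf(1,2) step.prems(3,2) VE] by blast
  next
    case (ear xs)
    have VE: "E' = {e\<in>E. e \<inter> ear_interior xs = {}}" using ear(4) unfolding delete_vertices_def by auto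
    obtain c where "good r E' k c" using IH ear(4) by blast
    moreover have "r + 1 \<le> length xs - 1" using ear(3) assms(2) by simp
    ultimately show ?thesis
      using ear_step[OF step.prems(1) ear(1,2) _ assms(3) step.prems(3,2) VE] by blast
  qed
qed

lemma maxdeg_ge: "finite V \<Longrightarrow> v \<in> V \<Longrightarrow> degree E v \<le> max_degree V E"
  unfolding max_degree_def by simp

theorem mainTheorem14:
  fixes V :: "'a set" and E :: "'a set set" and r :: nat
  assumes "simple_graph V E"
    and "r \<ge> 3"
    and "path_degenerate (r + 1) V E"
    and "max_degree V E \<ge> 3"
  shows "(forest V E \<longrightarrow> gen_acyclic_chromatic_index r V E = max_degree V E) \<and>
         (\<not> forest V E \<longrightarrow> gen_acyclic_chromatic_index r V E = max (max_degree V E) r)"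
proof -
  let ?D = "max_degree V E"
  have fV: "finite V" using assms(1) unfolding simple_graph_def by simp
  have degD: "\<forall>w\<in>V. degree E w \<le> ?D" using maxdeg_ge[OF fV] by blast
  have lowD: "\<And>k c. r_acyclic_edge_coloring r E k c \<Longrightarrow> ?D \<le> k"
    using coloring_maxdeg[OF assms(1)] by blast
  show ?thesis
  proof (intro conjI impI)
    assume fo: "forest V E"
    obtain c where c: "good r E ?D c" using upper[OF assms(3) refl assms(2) assms(1) assms(4) degD] by blast
    have col: "r_acyclic_edge_coloring r E ?D c"
      using c fo unfolding good_def r_acyclic_edge_coloring_def forest_def by blast
    show "gen_acyclic_chromatic_index r V E = ?D"
      unfolding gen_acyclic_chromatic_index_def
      by (rule Least_equality) (use col lowD in blast)+
  next
    assume nf: "\<not> forest V E"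
    then obtain vs0 where vs0: "is_cycle E vs0" unfolding forest_def by blast
    have "r + 1 + 1 \<le> length vs0" by (rule cycle_long[OF assms(3,1) vs0])
    hence vs0r: "r \<le> length vs0" by simp
    let ?k = "max ?D r"
    have k3: "3 \<le> ?k" using assms(4) by simp
    have degk: "\<forall>w\<in>V. degree E w \<le> ?k" using degD by (meson max.coboundedI1)
    obtain c where c: "good r E ?k c" using upper[OF assms(3) refl assms(2) assms(1) k3 degk] by blast
    have "min r ?k = r" by simp
    hence col: "r_acyclic_edge_coloring r E ?k c"
      using c unfolding good_def r_acyclic_edge_coloring_def by (metis min.coboundedI2 order_trans)
    have low: "\<And>k c. r_acyclic_edge_coloring r E k c \<Longrightarrow> ?k \<le> k"
      using lowD coloring_cycle[OF _ vs0 vs0r] by (meson max.boundedI)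
    show "gen_acyclic_chromatic_index r V E = ?k"
      unfolding gen_acyclic_chromatic_index_def
      by (rule Least_equality) (use col low in blast)+
  qed
qed

end
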